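(* Let $A\in M_m(R)$ be non-singular with $m\in\{2,3\}$, and write $f_A(x)=\sum_{k=0}^m a_kx^k$, $f_{A^\nabla}(x)=\sum_{k=0}^m b_kx^k$. Then $\det(A)f_{A^\nabla}(x)\models_{gs}x^mf_A(x^{-1})$, i.e. $\det(A)b_k\models_{gs}a_{m-k}$ for all $k$, and when $m=2$ equality $\det(A)f_{A^\nabla}(x)=x^2f_A(x^{-1})$ holds.
   Context: Supertropical semiring $R=T\cup G\cup\{-\infty\}$: $T=\mathcal G$ an ordered abelian group (tangible), $G=\{a^\nu\}$ a copy (ghost); $a+b$ is the element of larger $\nu$-value if the $\nu$-values differ and $a^\nu$ if equal; multiplication adds $\nu$-values, is ghost if a factor is ghost, $-\infty$ absorbing; $0_R=-\infty$, $1_R=0$. Ghost surpassing: $a\models_{gs}b$ iff $a=b$, or $a\in G$ with $\nu$-value of $a$ $\geq$ that of $b$; for polynomials it is coefficientwise. $\det(A)=\sum_{\sigma}\prod_i a_{i,\sigma(i)}$; non-singular iff $\det(A)\in T$; $\operatorname{adj}(A)_{i,j}=\det(A_{j,i})$; $A^\nabla=\det(A)^{-1}\operatorname{adj}(A)$. $f_M(x)=\det(xI+M)$ has $x^k$-coefficient the sum of determinants of all $(m-k)\times(m-k)$ principal submatrices of $M$; $x^mf_A(x^{-1})$ denotes $\sum_{k=0}^m a_{m-k}x^k$. *)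

theory Defs
  imports "HOL-Combinatorics.Permutations"
begin

text \<open>NegInf is -infinity (the zero of R), Tan g tangible, Gh g the ghost copy g^nu.\<close>
datatype 'g st = NegInf | Tan 'g | Gh 'g

fun stval :: "'g st \<Rightarrow> 'g" where
  "stval (Tan g) = g" | "stval (Gh g) = g" | "stval NegInf = undefined"

definition tangible :: "'g st \<Rightarrow> bool" where
  "tangible a \<longleftrightarrow> (\<exists>g. a = Tan g)"

instantiation st :: (linordered_ab_group_add) comm_monoid_add
begin
definition zero_st :: "'a st" where "zero_st = NegInf"
fun plus_st :: "'a st \<Rightarrow> 'a st \<Rightarrow> 'a st" where
  "plus_st NegInf b = b"
| "plus_st a NegInf = a"
| "plus_st a b = (if stval a < stval b then b else if stval b < stval a then a
                  else Gh (stval a))"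
instance
proof
  fix a b c :: "'a st"
  show "a + b + c = a + (b + c)"
    by (cases a; cases b; cases c) auto
  show "a + b = b + a"
    by (cases a; cases b) auto
  show "0 + a = a" by (simp add: zero_st_def)
qed
end

instantiation st :: (linordered_ab_group_add) comm_monoid_mult
begin
definition one_st :: "'a st" where "one_st = Tan 0"
fun times_st :: "'a st \<Rightarrow> 'a st \<Rightarrow> 'a st" where
  "times_st NegInf b = NegInf"
| "times_st a NegInf = NegInf"
| "times_st (Tan g) (Tan h) = Tan (g + h)"
| "times_st a b = Gh (stval a + stval b)"
instance
proof
  fix a b c :: "'a st"
  show "a * b * c = a * (b * c)"
    by (cases a; cases b; cases c) (auto simp: add.assoc)
  show "a * b = b * a"
    by (cases a; cases b) (auto simp: add.commute)
  show "1 * a = a" by (cases a) (auto simp: one_st_def)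
qed
end

definition gs :: "'g::linordered_ab_group_add st \<Rightarrow> 'g st \<Rightarrow> bool" where
  "gs a b \<longleftrightarrow> a = b \<or> (\<exists>g. a = Gh g \<and> (b = NegInf \<or> stval b \<le> g))"

fun tinv :: "'g::linordered_ab_group_add st \<Rightarrow> 'g st" where
  "tinv (Tan g) = Tan (- g)" | "tinv a = undefined"

section \<open>Matrices: an m x m matrix is a function on indices 0..m-1\<close>

type_synonym 'g stmat = "nat \<Rightarrow> nat \<Rightarrow> 'g st"

definition det :: "nat \<Rightarrow> 'g::linordered_ab_group_add stmat \<Rightarrow> 'g st" where
  "det m A = (\<Sum>\<sigma>\<in>{\<sigma>. \<sigma> permutes {..<m}}. \<Prod>i<m. A i (\<sigma> i))"

definition minor :: "'g stmat \<Rightarrow> nat \<Rightarrow> nat \<Rightarrow> 'g stmat" where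
  "minor A r c = (\<lambda>i j. A (if i < r then i else Suc i) (if j < c then j else Suc j))"

definition adj :: "nat \<Rightarrow> 'g::linordered_ab_group_add stmat \<Rightarrow> 'g stmat" where
  "adj m A = (\<lambda>i j. det (m - 1) (minor A j i))"

definition nabla :: "nat \<Rightarrow> 'g::linordered_ab_group_add stmat \<Rightarrow> 'g stmat" where
  "nabla m A = (\<lambda>i j. tinv (det m A) * adj m A i j)"

definition principal :: "'g stmat \<Rightarrow> nat set \<Rightarrow> 'g stmat" where
  "principal A S = (\<lambda>i j. A (sorted_list_of_set S ! i) (sorted_list_of_set S ! j))"

text \<open>k-th coefficient of f_M(x) = det(xI + M): sum of the determinants of all
  (m-k) x (m-k) principal submatrices of M.\<close>
definition charcoeff :: "nat \<Rightarrow> 'g::linordered_ab_group_add stmat \<Rightarrow> nat \<Rightarrow> 'g st" where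
  "charcoeff m M k = (\<Sum>S\<in>{S. S \<subseteq> {..<m} \<and> card S = m - k}. det (m - k) (principal M S))"

end

theory Submission
  imports Defs
begin

instance st :: (linordered_ab_group_add) comm_semiring_1
proof
  fix a b c :: "'a st"
  show "(a + b) * c = a * c + b * c"
    by (cases a; cases b; cases c) (auto simp: add.commute)
  show "0 * a = 0" by (cases a) (auto simp: zero_st_def)
  show "a * 0 = 0" by (cases a) (auto simp: zero_st_def)
  show "(0::'a st) \<noteq> 1" by (simp add: zero_st_def one_st_def)
qed

lemma det0: "det 0 A = 1" by (simp add: det_def)

lemma det1: "det 1 A = A 0 0"
proof -
  have e: "{..<1::nat} = insert 0 {}" by auto
  show ?thesis unfolding det_def e
    by (simp add: sum_over_permutations_insert transpose_def)
qed

lemma det2: "det 2 A = A 0 0 * A 1 1 + A 0 1 * A 1 0"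
proof -
  have e: "{..<2::nat} = insert 1 (insert 0 {})" by auto
  show ?thesis unfolding det_def e
    by (simp add: sum_over_permutations_insert transpose_def add.commute mult.commute)
qed

lemma det2S: "det (Suc (Suc 0)) A = A 0 0 * A 1 1 + A 0 1 * A 1 0"
  using det2[of A] by (simp add: numeral_2_eq_2)

lemma det3: "det 3 A = A 0 0 * (A 1 1 * A 2 2 + A 1 2 * A 2 1) + A 0 1 * (A 1 0 * A 2 2 + A 1 2 * A 2 0) + A 0 2 * (A 1 0 * A 2 1 + A 1 1 * A 2 0)"
proof -
  have e: "{..<3::nat} = insert 2 (insert 1 (insert 0 {}))" by auto
  show ?thesis unfolding det_def e
    by (simp add: sum_over_permutations_insert transpose_def algebra_simps)
qed

lemma sub_eq: "{S. S \<subseteq> A \<and> P S} = Set.filter P (Pow A)" by auto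
lemma e3: "{..<3::nat} = {0,1,2}" by auto
lemma e2: "{..<2::nat} = {0,1}" by auto
lemma s32: "{S. S \<subseteq> {..<3::nat} \<and> card S = 2} = {{0,1},{0,2},{1,2}}"
  unfolding e3 sub_eq by (simp add: Pow_insert) (rule set_eqI; auto)
lemma s31: "{S. S \<subseteq> {..<3::nat} \<and> card S = 1} = {{0},{1},{2}}"
  unfolding e3 sub_eq by (simp add: Pow_insert) (rule set_eqI; auto)
lemma s30: "{S. S \<subseteq> {..<3::nat} \<and> card S = 0} = {{}}"
  unfolding e3 sub_eq by (simp add: Pow_insert) (rule set_eqI; auto)
lemma s33: "{S. S \<subseteq> {..<3::nat} \<and> card S = 3} = {{0,1,2}}"
  unfolding e3 sub_eq by (simp add: Pow_insert) (rule set_eqI; auto)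
lemma s21: "{S. S \<subseteq> {..<2::nat} \<and> card S = 1} = {{0},{1}}"
  unfolding e2 sub_eq by (simp add: Pow_insert) (rule set_eqI; auto)
lemma s20: "{S. S \<subseteq> {..<2::nat} \<and> card S = 0} = {{}}"
  unfolding e2 sub_eq by (simp add: Pow_insert) (rule set_eqI; auto)
lemma s22: "{S. S \<subseteq> {..<2::nat} \<and> card S = 2} = {{0,1}}"
  unfolding e2 sub_eq by (simp add: Pow_insert) (rule set_eqI; auto)

lemma sumP: "sum f {{0,1},{0,2},{1,2::nat}} = f {0,1} + f {0,2} + f {1,2}"
  by (simp add: insert_commute doubleton_eq_iff add.assoc)
lemma sumS: "sum f {{0},{1},{2::nat}} = f {0} + f {1} + f {2}"
  by (simp add: add.assoc)

definition D3 :: "'a::comm_semiring_1 \<Rightarrow> 'a\<Rightarrow> 'a\<Rightarrow> 'a\<Rightarrow> 'a\<Rightarrow> 'a\<Rightarrow> 'a\<Rightarrow> 'a\<Rightarrow> 'a\<Rightarrow> 'a" where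
 "D3 m00 m01 m02 m10 m11 m12 m20 m21 m22 = m00 * (m11 * m22 + m12 * m21) + m01 * (m10 * m22 + m12 * m20) + m02 * (m10 * m21 + m11 * m20)"

lemma idP: fixes a b c d e f g h i :: "'a::comm_semiring_1"
  shows "D3 (e*i+f*h) (b*i+c*h) (b*f+c*e) (d*i+f*g) (a*i+c*g) (a*f+c*d) (d*h+e*g) (a*h+b*g) (a*e+b*d)
   = D3 a b c d e f g h i * D3 a b c d e f g h i + (b*c*d*e*g*i + a*b*d*f*h*i + a*c*e*f*g*h + b*c*d*f*g*h + a*b*e*f*g*i + a*c*d*e*h*i)
     + (b*c*d*e*g*i + a*b*d*f*h*i + a*c*e*f*g*h + b*c*d*f*g*h + a*b*e*f*g*i + a*c*d*e*h*i)"
  unfolding D3_def by (simp add: algebra_simps)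

lemma idS: fixes a b c d e f g h i :: "'a::comm_semiring_1"
  shows "((e*i+f*h)*(a*i+c*g) + (b*i+c*h)*(d*i+f*g)) + ((e*i+f*h)*(a*e+b*d) + (b*f+c*e)*(d*h+e*g))
      + ((a*i+c*g)*(a*e+b*d) + (a*f+c*d)*(a*h+b*g))
   = D3 a b c d e f g h i * (a+e+i) + (c*f*g*h + b*d*f*h + b*c*d*g) + (c*f*g*h + b*d*f*h + b*c*d*g)"
  unfolding D3_def by (simp add: algebra_simps)

lemma gs_refl: "gs x x" by (simp add: gs_def)

lemma gs_ghost: "gs (x + (y + y)) (x::'g::linordered_ab_group_add st)"
  by (cases x; cases y) (auto simp: gs_def zero_st_def)

lemma case3:
  fixes A :: "'g::linordered_ab_group_add stmat"
  assumes "tangible (det 3 A)"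
  shows "\<forall>k\<le>3. gs (det 3 A * charcoeff 3 (nabla 3 A) k) (charcoeff 3 A (3 - k))"
proof -
  obtain g0 where dg: "det 3 A = Tan g0" using assms by (auto simp: tangible_def)
  define t :: "'g st" where "t = Tan (- g0)"
  define d where "d = det 3 A"
  have td: "t * d = 1" by (simp add: t_def d_def dg one_st_def)
  have N: "nabla 3 A = (\<lambda>i j. t * adj 3 A i j)"
    by (simp add: nabla_def t_def dg)
  have adj: "adj 3 A 0 0 = A 1 1 * A 2 2 + A 1 2 * A 2 1"
    "adj 3 A 0 1 = A 0 1 * A 2 2 + A 0 2 * A 2 1"
    "adj 3 A 0 2 = A 0 1 * A 1 2 + A 0 2 * A 1 1"
    "adj 3 A 1 0 = A 1 0 * A 2 2 + A 1 2 * A 2 0"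
    "adj 3 A 1 1 = A 0 0 * A 2 2 + A 0 2 * A 2 0"
    "adj 3 A 1 2 = A 0 0 * A 1 2 + A 0 2 * A 1 0"
    "adj 3 A 2 0 = A 1 0 * A 2 1 + A 1 1 * A 2 0"
    "adj 3 A 2 1 = A 0 0 * A 2 1 + A 0 1 * A 2 0"
    "adj 3 A 2 2 = A 0 0 * A 1 1 + A 0 1 * A 1 0"
    by (simp_all add: adj_def det2S minor_def eval_nat_numeral)
  have dD: "d = D3 (A 0 0) (A 0 1) (A 0 2) (A 1 0) (A 1 1) (A 1 2) (A 2 0) (A 2 1) (A 2 2)"
    by (simp add: d_def det3 D3_def)
  note adjS = adj[unfolded One_nat_def]
  note P = idP[where a="A 0 0" and b="A 0 1" and c="A 0 2" and d="A 1 0" and e="A 1 1" and f="A 1 2" and g="A 2 0" and h="A 2 1" and i="A 2 2"]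
  note S = idS[where a="A 0 0" and b="A 0 1" and c="A 0 2" and d="A 1 0" and e="A 1 1" and f="A 1 2" and g="A 2 0" and h="A 2 1" and i="A 2 2"]
  show ?thesis
  proof (intro allI impI)
    fix k :: nat assume "k \<le> 3"
    then have "k = 0 \<or> k = 1 \<or> k = 2 \<or> k = 3" by arith
    then show "gs (det 3 A * charcoeff 3 (nabla 3 A) k) (charcoeff 3 A (3 - k))"
    proof (elim disjE)
      assume k: "k = 0"
      have c: "charcoeff 3 (nabla 3 A) 0 = t * t * t * (D3 (A 1 1 * A 2 2 + A 1 2 * A 2 1) (A 0 1 * A 2 2 + A 0 2 * A 2 1) (A 0 1 * A 1 2 + A 0 2 * A 1 1) (A 1 0 * A 2 2 + A 1 2 * A 2 0) (A 0 0 * A 2 2 + A 0 2 * A 2 0) (A 0 0 * A 1 2 + A 0 2 * A 1 0) (A 1 0 * A 2 1 + A 1 1 * A 2 0) (A 0 0 * A 2 1 + A 0 1 * A 2 0) (A 0 0 * A 1 1 + A 0 1 * A 1 0))"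
        by (simp add: charcoeff_def s33 det3 principal_def N adj adjS One_nat_def D3_def algebra_simps)
      have c': "charcoeff 3 A 3 = 1" by (simp add: charcoeff_def s30 det0)
      have "d * (t * t * t * (D3 (A 1 1 * A 2 2 + A 1 2 * A 2 1) (A 0 1 * A 2 2 + A 0 2 * A 2 1) (A 0 1 * A 1 2 + A 0 2 * A 1 1) (A 1 0 * A 2 2 + A 1 2 * A 2 0) (A 0 0 * A 2 2 + A 0 2 * A 2 0) (A 0 0 * A 1 2 + A 0 2 * A 1 0) (A 1 0 * A 2 1 + A 1 1 * A 2 0) (A 0 0 * A 2 1 + A 0 1 * A 2 0) (A 0 0 * A 1 1 + A 0 1 * A 1 0))) = 1 + (t * t * (A 0 1 * A 0 2 * A 1 0 * A 1 1 * A 2 0 * A 2 2 + A 0 0 * A 0 1 * A 1 0 * A 1 2 * A 2 1 * A 2 2 + A 0 0 * A 0 2 * A 1 1 * A 1 2 * A 2 0 * A 2 1 + A 0 1 * A 0 2 * A 1 0 * A 1 2 * A 2 0 * A 2 1 + A 0 0 * A 0 1 * A 1 1 * A 1 2 * A 2 0 * A 2 2 + A 0 0 * A 0 2 * A 1 0 * A 1 1 * A 2 1 * A 2 2) + t * t * (A 0 1 * A 0 2 * A 1 0 * A 1 1 * A 2 0 * A 2 2 + A 0 0 * A 0 1 * A 1 0 * A 1 2 * A 2 1 * A 2 2 + A 0 0 * A 0 2 * A 1 1 * A 1 2 * A 2 0 * A 2 1 + A 0 1 * A 0 2 * A 1 0 * A 1 2 * A 2 0 * A 2 1 + A 0 0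 * A 0 1 * A 1 1 * A 1 2 * A 2 0 * A 2 2 + A 0 0 * A 0 2 * A 1 0 * A 1 1 * A 2 1 * A 2 2))"
      proof -
        have "d * (t * t * t * (D3 (A 1 1 * A 2 2 + A 1 2 * A 2 1) (A 0 1 * A 2 2 + A 0 2 * A 2 1) (A 0 1 * A 1 2 + A 0 2 * A 1 1) (A 1 0 * A 2 2 + A 1 2 * A 2 0) (A 0 0 * A 2 2 + A 0 2 * A 2 0) (A 0 0 * A 1 2 + A 0 2 * A 1 0) (A 1 0 * A 2 1 + A 1 1 * A 2 0) (A 0 0 * A 2 1 + A 0 1 * A 2 0) (A 0 0 * A 1 1 + A 0 1 * A 1 0))) = d * (t * t * t * (d * d + (A 0 1 * A 0 2 * A 1 0 * A 1 1 * A 2 0 * A 2 2 + A 0 0 * A 0 1 * A 1 0 * A 1 2 * A 2 1 * A 2 2 + A 0 0 * A 0 2 * A 1 1 * A 1 2 * A 2 0 * A 2 1 + A 0 1 * A 0 2 * A 1 0 * A 1 2 * A 2 0 * A 2 1 + A 0 0 * A 0 1 * A 1 1 * A 1 2 * A 2 0 * A 2 2 + A 0 0 * A 0 2 * A 1 0 * A 1 1 * A 2 1 * A 2 2) + (A 0 1 * A 0 2 * A 1 0 * A 1 1 * A 2 0 * A 2 2 + A 0 0 * A 0 1 * A 1 0 * A 1 2 * A 2 1 * A 2 2 + A 0 0 * A 0 2 * A 1 1 * A 1 2 * A 2 0 * A 2 1 + A 0 1 * A 0 2 * A 1 0 * A 1 2 * A 2 0 * A 2 1 + A 0 0 * A 0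 1 * A 1 1 * A 1 2 * A 2 0 * A 2 2 + A 0 0 * A 0 2 * A 1 0 * A 1 1 * A 2 1 * A 2 2)))"
          by (simp only: P dD)
        also have "\<dots> = (t*d)*(t*d)*(t*d) + ((t*d) * (t * t * (A 0 1 * A 0 2 * A 1 0 * A 1 1 * A 2 0 * A 2 2 + A 0 0 * A 0 1 * A 1 0 * A 1 2 * A 2 1 * A 2 2 + A 0 0 * A 0 2 * A 1 1 * A 1 2 * A 2 0 * A 2 1 + A 0 1 * A 0 2 * A 1 0 * A 1 2 * A 2 0 * A 2 1 + A 0 0 * A 0 1 * A 1 1 * A 1 2 * A 2 0 * A 2 2 + A 0 0 * A 0 2 * A 1 0 * A 1 1 * A 2 1 * A 2 2)) + (t*d) * (t * t * (A 0 1 * A 0 2 * A 1 0 * A 1 1 * A 2 0 * A 2 2 + A 0 0 * A 0 1 * A 1 0 * A 1 2 * A 2 1 * A 2 2 + A 0 0 * A 0 2 * A 1 1 * A 1 2 * A 2 0 * A 2 1 + A 0 1 * A 0 2 * A 1 0 * A 1 2 * A 2 0 * A 2 1 + A 0 0 * A 0 1 * A 1 1 * A 1 2 * A 2 0 * A 2 2 + A 0 0 * A 0 2 * A 1 0 * A 1 1 * A 2 1 * A 2 2)))"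
          by (simp add: algebra_simps)
        finally show ?thesis by (simp add: td)
      qed
      then show ?thesis unfolding k using c c' gs_ghost by (simp add: d_def[symmetric])
    next
      assume k: "k = 1"
      have c: "charcoeff 3 (nabla 3 A) 1 = t * t * (((A 1 1 * A 2 2 + A 1 2 * A 2 1)*(A 0 0 * A 2 2 + A 0 2 * A 2 0) + (A 0 1 * A 2 2 + A 0 2 * A 2 1)*(A 1 0 * A 2 2 + A 1 2 * A 2 0)) + ((A 1 1 * A 2 2 + A 1 2 * A 2 1)*(A 0 0 * A 1 1 + A 0 1 * A 1 0) + (A 0 1 * A 1 2 + A 0 2 * A 1 1)*(A 1 0 * A 2 1 + A 1 1 * A 2 0)) + ((A 0 0 * A 2 2 + A 0 2 * A 2 0)*(A 0 0 * A 1 1 + A 0 1 * A 1 0) + (A 0 0 * A 1 2 + A 0 2 * A 1 0)*(A 0 0 * A 2 1 + A 0 1 * A 2 0)))"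
        by (simp add: charcoeff_def s32 sumP sumP[unfolded One_nat_def] det2 principal_def N adj adjS One_nat_def algebra_simps)
      have c': "charcoeff 3 A 2 = (A 0 0 + A 1 1 + A 2 2)" by (simp add: charcoeff_def s31 s31[unfolded One_nat_def] sumS sumS[unfolded One_nat_def] det1 det1[unfolded One_nat_def] principal_def One_nat_def)
      have "d * (t * t * (((A 1 1 * A 2 2 + A 1 2 * A 2 1)*(A 0 0 * A 2 2 + A 0 2 * A 2 0) + (A 0 1 * A 2 2 + A 0 2 * A 2 1)*(A 1 0 * A 2 2 + A 1 2 * A 2 0)) + ((A 1 1 * A 2 2 + A 1 2 * A 2 1)*(A 0 0 * A 1 1 + A 0 1 * A 1 0) + (A 0 1 * A 1 2 + A 0 2 * A 1 1)*(A 1 0 * A 2 1 + A 1 1 * A 2 0)) + ((A 0 0 * A 2 2 + A 0 2 * A 2 0)*(A 0 0 * A 1 1 + A 0 1 * A 1 0) + (A 0 0 * A 1 2 + A 0 2 * A 1 0)*(A 0 0 * A 2 1 + A 0 1 * A 2 0)))) = (A 0 0 + A 1 1 + A 2 2) + (t * (A 0 2 * A 1 2 * A 2 0 * A 2 1 + A 0 1 * A 1 0 * A 1 2 * A 2 1 + A 0 1 * A 0 2 * A 1 0 * A 2 0) + t * (A 0 2 * A 1 2 * A 2 0 * A 2 1 + A 0 1 * A 1 0 * A 1 2 * A 2 1 + A 0 1 * A 0 2 * A 1 0 * A 2 0))"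
      proof -
        have "d * (t * t * (((A 1 1 * A 2 2 + A 1 2 * A 2 1)*(A 0 0 * A 2 2 + A 0 2 * A 2 0) + (A 0 1 * A 2 2 + A 0 2 * A 2 1)*(A 1 0 * A 2 2 + A 1 2 * A 2 0)) + ((A 1 1 * A 2 2 + A 1 2 * A 2 1)*(A 0 0 * A 1 1 + A 0 1 * A 1 0) + (A 0 1 * A 1 2 + A 0 2 * A 1 1)*(A 1 0 * A 2 1 + A 1 1 * A 2 0)) + ((A 0 0 * A 2 2 + A 0 2 * A 2 0)*(A 0 0 * A 1 1 + A 0 1 * A 1 0) + (A 0 0 * A 1 2 + A 0 2 * A 1 0)*(A 0 0 * A 2 1 + A 0 1 * A 2 0)))) = d * (t * t * (d * (A 0 0 + A 1 1 + A 2 2) + (A 0 2 * A 1 2 * A 2 0 * A 2 1 + A 0 1 * A 1 0 * A 1 2 * A 2 1 + A 0 1 * A 0 2 * A 1 0 * A 2 0) + (A 0 2 * A 1 2 * A 2 0 * A 2 1 + A 0 1 * A 1 0 * A 1 2 * A 2 1 + A 0 1 * A 0 2 * A 1 0 * A 2 0)))"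
          by (simp only: S dD)
        also have "\<dots> = (t*d)*(t*d)*(A 0 0 + A 1 1 + A 2 2) + ((t*d) * (t * (A 0 2 * A 1 2 * A 2 0 * A 2 1 + A 0 1 * A 1 0 * A 1 2 * A 2 1 + A 0 1 * A 0 2 * A 1 0 * A 2 0)) + (t*d) * (t * (A 0 2 * A 1 2 * A 2 0 * A 2 1 + A 0 1 * A 1 0 * A 1 2 * A 2 1 + A 0 1 * A 0 2 * A 1 0 * A 2 0)))"
          by (simp add: algebra_simps)
        finally show ?thesis by (simp add: td)
      qed
      then show ?thesis unfolding k using c c' gs_ghost by (simp add: d_def[symmetric])
    next
      assume k: "k = 2"
      have c: "charcoeff 3 (nabla 3 A) 2 = t * ((A 1 1 * A 2 2 + A 1 2 * A 2 1) + (A 0 0 * A 2 2 + A 0 2 * A 2 0) + (A 0 0 * A 1 1 + A 0 1 * A 1 0))"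
        by (simp add: charcoeff_def s31 s31[unfolded One_nat_def] sumS sumS[unfolded One_nat_def] det1 det1[unfolded One_nat_def] principal_def N adj adjS One_nat_def algebra_simps)
      have c': "charcoeff 3 A 1 = (A 1 1 * A 2 2 + A 1 2 * A 2 1) + (A 0 0 * A 2 2 + A 0 2 * A 2 0) + (A 0 0 * A 1 1 + A 0 1 * A 1 0)" by (simp add: charcoeff_def s32 sumP sumP[unfolded One_nat_def] det2 principal_def One_nat_def algebra_simps)
      have "d * (t * ((A 1 1 * A 2 2 + A 1 2 * A 2 1) + (A 0 0 * A 2 2 + A 0 2 * A 2 0) + (A 0 0 * A 1 1 + A 0 1 * A 1 0))) = (t * d) * ((A 1 1 * A 2 2 + A 1 2 * A 2 1) + (A 0 0 * A 2 2 + A 0 2 * A 2 0) + (A 0 0 * A 1 1 + A 0 1 * A 1 0))" by (simp add: algebra_simps)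
      then show ?thesis unfolding k using c c' gs_refl by (simp add: d_def[symmetric] td)
    next
      assume k: "k = 3"
      have c: "charcoeff 3 (nabla 3 A) 3 = 1" by (simp add: charcoeff_def s30 det0)
      have c': "charcoeff 3 A 0 = det 3 A" by (simp add: charcoeff_def s33 det3 principal_def One_nat_def)
      show ?thesis unfolding k using c c' gs_refl by simp
    qed
  qed
qed

lemma sum2: "sum f {{0},{1::nat}} = f {0} + f {1}"
  by simp

lemma case2:
  fixes A :: "'g::linordered_ab_group_add stmat"
  assumes "tangible (det 2 A)"
  shows "\<forall>k\<le>2. det 2 A * charcoeff 2 (nabla 2 A) k = charcoeff 2 A (2 - k)"
proof -
  obtain g0 where dg: "det 2 A = Tan g0" using assms by (auto simp: tangible_def)
  define t :: "'g st" where "t = Tan (- g0)"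
  define d where "d = det 2 A"
  have td: "t * d = 1" by (simp add: t_def d_def dg one_st_def)
  have N: "nabla 2 A = (\<lambda>i j. t * adj 2 A i j)"
    by (simp add: nabla_def t_def dg)
  have adj: "adj 2 A 0 0 = A 1 1" "adj 2 A 0 1 = A 0 1" "adj 2 A 1 0 = A 1 0" "adj 2 A 1 1 = A 0 0"
    by (simp_all add: adj_def det1 det1[unfolded One_nat_def] minor_def One_nat_def)
  note adjS = adj[unfolded One_nat_def]
  have dD: "d = A 0 0 * A 1 1 + A 0 1 * A 1 0" by (simp add: d_def det2)
  show ?thesis
  proof (intro allI impI)
    fix k :: nat assume "k \<le> 2"
    then have "k = 0 \<or> k = 1 \<or> k = 2" by arith
    then show "det 2 A * charcoeff 2 (nabla 2 A) k = charcoeff 2 A (2 - k)"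
    proof (elim disjE)
      assume k: "k = 0"
      have c: "charcoeff 2 (nabla 2 A) 0 = t * t * (A 0 0 * A 1 1 + A 0 1 * A 1 0)"
        by (simp add: charcoeff_def s22 det2 principal_def N adj adjS One_nat_def algebra_simps)
      have c': "charcoeff 2 A 2 = 1" by (simp add: charcoeff_def s20 det0)
      have "d * (t * t * (A 0 0 * A 1 1 + A 0 1 * A 1 0)) = (t * d) * (t * d)"
        by (simp add: dD algebra_simps)
      then show ?thesis unfolding k using c c' td by (simp add: d_def[symmetric])
    next
      assume k: "k = 1"
      have c: "charcoeff 2 (nabla 2 A) 1 = t * (A 0 0 + A 1 1)"
        by (simp add: charcoeff_def s21 s21[unfolded One_nat_def] sum2 sum2[unfolded One_nat_def] det1 det1[unfolded One_nat_def] principal_def N adj adjS One_nat_def algebra_simps)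
      have c': "charcoeff 2 A 1 = A 0 0 + A 1 1"
        by (simp add: charcoeff_def s21 s21[unfolded One_nat_def] sum2 sum2[unfolded One_nat_def] det1 det1[unfolded One_nat_def] principal_def One_nat_def)
      have "d * (t * (A 0 0 + A 1 1)) = (t * d) * (A 0 0 + A 1 1)"
        by (simp add: algebra_simps)
      then show ?thesis unfolding k using c c' td by (simp add: d_def[symmetric])
    next
      assume k: "k = 2"
      have c: "charcoeff 2 (nabla 2 A) 2 = 1" by (simp add: charcoeff_def s20 det0)
      have c': "charcoeff 2 A 0 = det 2 A" by (simp add: charcoeff_def s22 det2 principal_def One_nat_def)
      show ?thesis unfolding k using c c' by simp
    qed
  qed
qed

theorem mainTheorem11:
  fixes A :: "'g::linordered_ab_group_add stmat" and m :: nat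
  assumes "m \<in> {2, 3}"
    and "tangible (det m A)"
  shows "(\<forall>k\<le>m. gs (det m A * charcoeff m (nabla m A) k) (charcoeff m A (m - k)))
       \<and> (m = 2 \<longrightarrow> (\<forall>k\<le>m. det m A * charcoeff m (nabla m A) k = charcoeff m A (m - k)))"
proof (cases "m = 2")
  case True
  have "\<forall>k\<le>2. det 2 A * charcoeff 2 (nabla 2 A) k = charcoeff 2 A (2 - k)"
    using case2 assms(2) True by simp
  then show ?thesis using True by (simp add: gs_refl)
next
  case False
  then have m: "m = 3" using assms(1) by simp
  show ?thesis using case3 assms(2) m by simp
qed

end
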